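(* Let $\mathcal{T}$ be an almost linear iteration tree with tree order $T$, and let $\lambda\le\mathrm{lh}(\mathcal{T})$ be a limit ordinal (or $\lambda=\mathrm{OR}$). Then $\mathcal{T}\restriction\lambda$ has a unique cofinal branch $b$, and if $\lambda<\mathrm{lh}(\mathcal{T})$ then $b=[0,\lambda)_T$.
   Context: Iteration trees are as in inner model theory (Mitchell–Steel, "Fine structure and iteration trees"): $T$ is the tree order on $\mathrm{lh}(\mathcal{T})$, $[0,\alpha)_T$ denotes the set of $T$-predecessors of $\alpha$, and $T\text{-pred}(i+1)$ is the immediate $T$-predecessor of $i+1$. An iteration tree $\mathcal{T}$ is almost linear if (a) for all $i+1<\mathrm{lh}(\mathcal{T})$ we have $T\text{-pred}(i+1)\in[0,i]_T$, and (b) every $i<\mathrm{lh}(\mathcal{T})$ has only finitely many immediate $T$-successors. A cofinal branch of $\mathcal{T}\restriction\lambda$ is a set $b\subseteq\lambda$ which is linearly ordered and downward closed under $T$ and unbounded in $\lambda$. *)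

theory Defs
  imports Main
begin

text \<open>Ordinals are modelled by an arbitrary well-ordered type 'a.  The length
  lh(T) of an iteration tree is modelled by an initial segment L of 'a
  (L = UNIV allowed), and the tree order by a relation T, where T x y means
  x is a T-predecessor of y.  Only the tree-order part of an iteration tree
  matters for the statement.\<close>

definition initial_segment :: "'a::wellorder set \<Rightarrow> bool" where
  "initial_segment L \<longleftrightarrow> (\<forall>x\<in>L. \<forall>y. y < x \<longrightarrow> y \<in> L)"

definition is_succ_of :: "'a::wellorder \<Rightarrow> 'a \<Rightarrow> bool" where
  "is_succ_of i j \<longleftrightarrow> i < j \<and> \<not> (\<exists>k. i < k \<and> k < j)"

definition is_successor :: "'a::wellorder \<Rightarrow> bool" where
  "is_successor j \<longleftrightarrow> (\<exists>i. is_succ_of i j)"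

definition imm_succ :: "('a \<Rightarrow> 'a \<Rightarrow> bool) \<Rightarrow> 'a \<Rightarrow> 'a \<Rightarrow> bool" where
  "imm_succ T i j \<longleftrightarrow> T i j \<and> \<not> (\<exists>k. T i k \<and> T k j)"

definition iteration_tree_order :: "'a::wellorder set \<Rightarrow> ('a \<Rightarrow> 'a \<Rightarrow> bool) \<Rightarrow> bool" where
  "iteration_tree_order L T \<longleftrightarrow>
     initial_segment L \<and> L \<noteq> {} \<and>
     (\<forall>x y. T x y \<longrightarrow> x \<in> L \<and> y \<in> L \<and> x < y) \<and>
     (\<forall>x y z. T x y \<longrightarrow> T y z \<longrightarrow> T x z) \<and>
     (\<forall>z x y. T x z \<longrightarrow> T y z \<longrightarrow> x = y \<or> T x y \<or> T y x) \<and>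
     (\<exists>r\<in>L. \<forall>x\<in>L. x \<noteq> r \<longrightarrow> T r x) \<and>
     (\<forall>j\<in>L. is_successor j \<longrightarrow>
        (\<exists>p. T p j \<and> (\<forall>x. T x j \<longrightarrow> x = p \<or> T x p))) \<and>
     (\<forall>j\<in>L. (\<exists>x. x < j) \<longrightarrow> \<not> is_successor j \<longrightarrow>
        (\<forall>x. x < j \<longrightarrow> (\<exists>y. T y j \<and> x \<le> y)))"

definition almost_linear :: "'a::wellorder set \<Rightarrow> ('a \<Rightarrow> 'a \<Rightarrow> bool) \<Rightarrow> bool" where
  "almost_linear L T \<longleftrightarrow>
     (\<forall>i j p. j \<in> L \<longrightarrow> is_succ_of i j \<longrightarrow> imm_succ T p j \<longrightarrow> p = i \<or> T p i) \<and>
     (\<forall>i\<in>L. finite {j. imm_succ T i j})"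

text \<open>A limit ordinal \<lambda> \<le> lh(T) (or OR), given as the set of ordinals below it.\<close>
definition limit_cut :: "'a::wellorder set \<Rightarrow> 'a set \<Rightarrow> bool" where
  "limit_cut L S \<longleftrightarrow> S \<subseteq> L \<and> initial_segment S \<and> S \<noteq> {} \<and> (\<forall>x\<in>S. \<exists>y\<in>S. x < y)"

definition cofinal_branch :: "('a::wellorder \<Rightarrow> 'a \<Rightarrow> bool) \<Rightarrow> 'a set \<Rightarrow> 'a set \<Rightarrow> bool" where
  "cofinal_branch T S b \<longleftrightarrow> b \<subseteq> S \<and>
     (\<forall>x\<in>b. \<forall>y\<in>b. x = y \<or> T x y \<or> T y x) \<and>
     (\<forall>y\<in>b. \<forall>x. T x y \<longrightarrow> x \<in> b) \<and>
     (\<forall>x\<in>S. \<exists>y\<in>b. x \<le> y)"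

end

theory Submission
  imports Defs
begin

lemma ito_Lini: "iteration_tree_order L T \<Longrightarrow> initial_segment L"
  by (simp add: iteration_tree_order_def)
lemma ito_T: "iteration_tree_order L T \<Longrightarrow> T x y \<Longrightarrow> x < y \<and> x \<in> L \<and> y \<in> L"
  unfolding iteration_tree_order_def by simp
lemma ito_tr: "iteration_tree_order L T \<Longrightarrow> T x y \<Longrightarrow> T y z \<Longrightarrow> T x z"
  unfolding iteration_tree_order_def by metis
lemma ito_lin: "iteration_tree_order L T \<Longrightarrow> T x z \<Longrightarrow> T y z \<Longrightarrow> x = y \<or> T x y \<or> T y x"
  unfolding iteration_tree_order_def by metis
lemma ito_root: "iteration_tree_order L T \<Longrightarrow> \<exists>r\<in>L. \<forall>x\<in>L. x \<noteq> r \<longrightarrow> T r x"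
  unfolding iteration_tree_order_def by simp
lemma ito_succ: "iteration_tree_order L T \<Longrightarrow> j \<in> L \<Longrightarrow> is_successor j \<Longrightarrow>
    \<exists>p. T p j \<and> (\<forall>x. T x j \<longrightarrow> x = p \<or> T x p)"
  unfolding iteration_tree_order_def by simp
lemma ito_lim: "iteration_tree_order L T \<Longrightarrow> j \<in> L \<Longrightarrow> x < j \<Longrightarrow> \<not> is_successor j \<Longrightarrow>
    \<exists>y. T y j \<and> x \<le> y"
  unfolding iteration_tree_order_def by blast
lemma al_succ: "almost_linear L T \<Longrightarrow> j \<in> L \<Longrightarrow> is_succ_of i j \<Longrightarrow> imm_succ T p j \<Longrightarrow> p = i \<or> T p i"
  unfolding almost_linear_def by simp
lemma al_fin: "almost_linear L T \<Longrightarrow> i \<in> L \<Longrightarrow> finite {j. imm_succ T i j}"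
  unfolding almost_linear_def by simp

lemma itoP:
  assumes it: "iteration_tree_order L T" and al: "almost_linear L T"
  shows "j \<in> L \<Longrightarrow> (x = j \<or> T x j) \<Longrightarrow> x \<le> i \<Longrightarrow> i \<le> j \<Longrightarrow> x = i \<or> T x i"
proof (induction j arbitrary: x i rule: less_induct)
  case (less j)
  show ?case
  proof (cases "i = j")
    case True thus ?thesis using less by auto
  next
    case False
    hence ij: "i < j" using less by auto
    have Txj: "T x j" using less ij by auto
    have Tlt: "\<And>a b. T a b \<Longrightarrow> a < b \<and> a \<in> L \<and> b \<in> L" using ito_T[OF it] by blast
    have Ttr: "\<And>a b c. T a b \<Longrightarrow> T b c \<Longrightarrow> T a c" using ito_tr[OF it] by blast
    have Tlin: "\<And>a b c. T a c \<Longrightarrow> T b c \<Longrightarrow> a = b \<or> T a b \<or> T b a" using ito_lin[OF it] by blast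
    show ?thesis
    proof (cases "is_successor j")
      case True
      then obtain k where k: "is_succ_of k j" unfolding is_successor_def by blast
      from ito_succ[OF it less.prems(1) True] obtain p where p: "T p j" "\<forall>y. T y j \<longrightarrow> y = p \<or> T y p"
        by blast
      have "imm_succ T p j" unfolding imm_succ_def using p Tlt by (metis less_asym less_irrefl)
      hence pk: "p = k \<or> T p k" using al_succ[OF al less.prems(1) k] by blast
      have kj: "k < j" using k unfolding is_succ_of_def by blast
      have ik: "i \<le> k" using k ij unfolding is_succ_of_def by (meson not_le)
      have kL: "k \<in> L" using kj less.prems(1) ito_Lini[OF it] unfolding initial_segment_def by blast
      have xk: "x = k \<or> T x k" using p(2) Txj pk Ttr by metis
      show ?thesis using less.IH[OF kj kL xk less.prems(3) ik] .
    next
      case False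
      obtain y where y: "T y j" "i \<le> y" using ito_lim[OF it less.prems(1) ij False] by blast
      have "x = y \<or> T x y \<or> T y x" using Tlin Txj y(1) by blast
      moreover have "\<not> T y x" using Tlt y less.prems(3) by (meson leD order_trans)
      ultimately have xy: "x = y \<or> T x y" by blast
      have yj: "y < j" and yL: "y \<in> L" using Tlt y(1) by auto
      show ?thesis using less.IH[OF yj yL xy less.prems(3) y(2)] .
    qed
  qed
qed

lemma child_exists:
  assumes it: "iteration_tree_order L T" and "T x z"
  shows "\<exists>w. imm_succ T x w \<and> (w = z \<or> T w z)"
proof -
  have Tlt: "\<And>a b. T a b \<Longrightarrow> a < b" using ito_T[OF it] by blast
  have Ttr: "\<And>a b c. T a b \<Longrightarrow> T b c \<Longrightarrow> T a c" using ito_tr[OF it] by blast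
  define w where "w = (LEAST w. T x w \<and> (w = z \<or> T w z))"
  have W: "T x w \<and> (w = z \<or> T w z)" unfolding w_def by (rule LeastI[where k=z]) (use assms in auto)
  moreover have "\<not> (\<exists>k. T x k \<and> T k w)"
  proof
    assume "\<exists>k. T x k \<and> T k w"
    then obtain k where k: "T x k" "T k w" by blast
    hence "T x k \<and> (k = z \<or> T k z)" using W Ttr by blast
    hence "w \<le> k" unfolding w_def by (rule Least_le)
    thus False using Tlt[OF k(2)] by simp
  qed
  ultimately show ?thesis unfolding imm_succ_def by blast
qed

theorem lemma2p2:
  fixes L :: "'a::wellorder set" and T :: "'a \<Rightarrow> 'a \<Rightarrow> bool" and S :: "'a set"
  assumes "iteration_tree_order L T"
    and "almost_linear L T"
    and "limit_cut L S"
  shows "\<exists>b. (\<forall>c. cofinal_branch T S c \<longleftrightarrow> c = b) \<and>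
             (\<forall>l\<in>L. S = {x. x < l} \<longrightarrow> b = {x. T x l})"
proof -
  note it = assms(1) and al = assms(2)
  have Tlt: "\<And>a b. T a b \<Longrightarrow> a < b \<and> a \<in> L \<and> b \<in> L" using ito_T[OF it] by blast
  have Ttr: "\<And>a b c. T a b \<Longrightarrow> T b c \<Longrightarrow> T a c" using ito_tr[OF it] by blast
  have Tlin: "\<And>a b c. T a c \<Longrightarrow> T b c \<Longrightarrow> a = b \<or> T a b \<or> T b a" using ito_lin[OF it] by blast
  have P: "\<And>j x i. j \<in> L \<Longrightarrow> (x = j \<or> T x j) \<Longrightarrow> x \<le> i \<Longrightarrow> i \<le> j \<Longrightarrow> x = i \<or> T x i"
    using itoP[OF it al] by blast
  have SL: "S \<subseteq> L" and Sini: "initial_segment S" and Sne: "S \<noteq> {}" and Snm: "\<forall>x\<in>S. \<exists>y\<in>S. x < y"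
    using assms(3) unfolding limit_cut_def by auto
  have Sdown: "\<And>x y. y \<in> S \<Longrightarrow> x \<le> y \<Longrightarrow> x \<in> S" using Sini unfolding initial_segment_def
    by (metis order.order_iff_strict)
  have leT_lin: "\<And>a b c. (a = c \<or> T a c) \<Longrightarrow> (b = c \<or> T b c) \<Longrightarrow> a = b \<or> T a b \<or> T b a"
    using Tlin by blast
  have leT_le: "\<And>a b. a \<le> b \<Longrightarrow> (a = b \<or> T a b \<or> T b a) \<Longrightarrow> a = b \<or> T a b"
    using Tlt by (meson leD)
  obtain r where r: "r \<in> L" "\<forall>x\<in>L. x \<noteq> r \<longrightarrow> T r x" using ito_root[OF it] by blast
  define b where "b = {x \<in> S. \<forall>z\<in>S. x \<le> z \<longrightarrow> x = z \<or> T x z}"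
  have b_down: "\<And>x y. y \<in> b \<Longrightarrow> T x y \<Longrightarrow> x \<in> b"
  proof -
    fix x y assume y: "y \<in> b" and xy: "T x y"
    have yS: "y \<in> S" using y unfolding b_def by blast
    have xS: "x \<in> S" using Sdown[OF yS] Tlt[OF xy] by (simp add: less_imp_le)
    have "\<forall>z\<in>S. x \<le> z \<longrightarrow> x = z \<or> T x z"
    proof (intro ballI impI)
      fix z assume zS: "z \<in> S" and xz: "x \<le> z"
      show "x = z \<or> T x z"
      proof (cases "y \<le> z")
        case True
        then have "y = z \<or> T y z" using y zS unfolding b_def by blast
        thus ?thesis using xy Ttr by blast
      next
        case False
        thus ?thesis using P[of y x z] xy Tlt xz by auto
      qed
    qed
    thus "x \<in> b" using xS unfolding b_def by blast
  qed
  have b_lin: "\<And>x y. x \<in> b \<Longrightarrow> y \<in> b \<Longrightarrow> x = y \<or> T x y \<or> T y x"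
    using linear unfolding b_def by blast
  have rS: "r \<in> S"
  proof -
    obtain s0 where "s0 \<in> S" using Sne by blast
    moreover have "r \<le> s0" using r SL \<open>s0 \<in> S\<close> Tlt by (metis order.order_iff_strict subsetD)
    ultimately show ?thesis using Sdown by blast
  qed
  have rb: "r \<in> b" unfolding b_def using rS r SL by auto
  have F2: "\<And>x. x \<in> b \<Longrightarrow> \<exists>c\<in>b. T x c"
  proof -
    fix x assume xb: "x \<in> b"
    have xS: "x \<in> S" using xb unfolding b_def by blast
    have xL: "x \<in> L" using xS SL by blast
    define F where "F = insert x ({j. imm_succ T x j} \<inter> S)"
    have Ffin: "finite F" using al_fin[OF al xL] unfolding F_def by simp
    have FS: "F \<subseteq> S" using xS unfolding F_def by blast
    have "Max F \<in> S" using Ffin FS unfolding F_def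
      by (metis Max_in empty_not_insert subsetD)
    then obtain c0 where c0: "c0 \<in> S" "Max F < c0" using Snm by blast
    have Fc0: "\<And>f. f \<in> F \<Longrightarrow> f < c0" using c0 Ffin by (meson Max_ge le_less_trans)
    have xc0: "T x c0" using Fc0[of x] xb c0(1) unfolding F_def b_def by auto
    obtain c where c: "imm_succ T x c" "c = c0 \<or> T c c0" using child_exists[OF it xc0] by blast
    have cc0: "c \<le> c0" using c Tlt by (meson less_imp_le order.refl)
    have cS: "c \<in> S" using cc0 c0 Sdown by blast
    have "\<forall>z\<in>S. c \<le> z \<longrightarrow> c = z \<or> T c z"
    proof (intro ballI impI)
      fix z assume zS: "z \<in> S" and cz: "c \<le> z"
      show "c = z \<or> T c z"
      proof (cases "z \<le> c0")
        case True
        thus ?thesis using P[of c0 c z] c(2) cz c0 SL by blast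
      next
        case False
        hence "x < z" using xc0 Tlt by (meson less_trans not_le)
        hence Txz: "T x z" using xb zS unfolding b_def by auto
        obtain c' where c': "imm_succ T x c'" "c' = z \<or> T c' z" using child_exists[OF it Txz] by blast
        have "c' \<le> z" using c' Tlt by (meson less_imp_le order.refl)
        hence "c' \<in> S" using zS Sdown by blast
        hence "c' \<in> F" using c' unfolding F_def by blast
        hence c'c0: "c' < c0" using Fc0 by blast
        have "c' = c0 \<or> T c' c0" using P[of z c' c0] c'(2) zS SL False c'c0 by auto
        hence "c = c' \<or> T c c' \<or> T c' c" using leT_lin c(2) by blast
        hence "c = c'" using c(1) c'(1) unfolding imm_succ_def by blast
        thus ?thesis using c' by blast
      qed
    qed
    hence "c \<in> b" using cS unfolding b_def by blast
    thus "\<exists>c\<in>b. T x c" using c(1) unfolding imm_succ_def by blast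
  qed
  have cof: "\<forall>x\<in>S. \<exists>y\<in>b. x \<le> y"
  proof (rule ccontr)
    assume "\<not> (\<forall>x\<in>S. \<exists>y\<in>b. x \<le> y)"
    then obtain s where s: "s \<in> S" "\<forall>y\<in>b. y < s" by (meson not_le)
    define l where "l = (LEAST u. \<forall>x\<in>b. x < u)"
    have lub: "\<forall>x\<in>b. x < l" unfolding l_def by (rule LeastI[where k=s]) (use s in auto)
    have ls: "l \<le> s" unfolding l_def using s by (simp add: Least_le)
    have lS: "l \<in> S" using ls s Sdown by blast
    have below: "\<And>y. y < l \<Longrightarrow> \<exists>x\<in>b. y \<le> x"
    proof -
      fix y assume "y < l"
      hence "\<not> (\<forall>x\<in>b. x < y)" unfolding l_def using not_less_Least by blast
      thus "\<exists>x\<in>b. y \<le> x" by (meson not_le)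
    qed
    have "l \<in> b"
    proof -
      have "\<forall>z\<in>S. l \<le> z \<longrightarrow> l = z \<or> T l z"
      proof (intro ballI impI)
        fix z assume zS: "z \<in> S" and lz: "l \<le> z"
        define w where "w = (LEAST w. l \<le> w \<and> (w = z \<or> T w z))"
        have W: "l \<le> w \<and> (w = z \<or> T w z)" unfolding w_def by (rule LeastI[where k=z]) (use lz in auto)
        have wz: "w \<le> z" using W Tlt by (meson less_imp_le order.refl)
        have wL: "w \<in> L" using wz zS Sdown SL by blast
        have A: "\<And>x. x \<in> b \<Longrightarrow> T x w"
        proof -
          fix x assume xb: "x \<in> b"
          have "x < z" using lub xb lz by (meson less_le_trans)
          hence "T x z" using xb zS unfolding b_def by auto
          moreover have "x \<le> w" using lub xb W by (meson less_imp_le order.trans)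
          moreover have "z \<in> L" using zS SL by blast
          ultimately have "x = w \<or> T x w" using P[of z x w] wz by blast
          thus "T x w" using lub xb W by (metis leD)
        qed
        have B: "\<And>y. T y w \<Longrightarrow> y \<in> b"
        proof -
          fix y assume yw: "T y w"
          have yz: "y = z \<or> T y z" using yw W Ttr by blast
          have "y < l"
          proof (rule ccontr)
            assume "\<not> y < l"
            hence "w \<le> y" unfolding w_def using yz by (simp add: Least_le not_less)
            thus False using Tlt[OF yw] by (simp add: leD)
          qed
          then obtain x where x: "x \<in> b" "y \<le> x" using below by blast
          have "y = x \<or> T y x" using leT_le[OF x(2)] leT_lin[of y w x] yw A[OF x(1)] by blast
          thus "y \<in> b" using x b_down by blast
        qed
        have "w = l"
        proof (rule ccontr)
          assume "w \<noteq> l"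
          hence lw: "l < w" using W by (metis order.order_iff_strict)
          show False
          proof (cases "is_successor w")
            case True
            from ito_succ[OF it wL True] obtain p where p: "T p w" "\<forall>y. T y w \<longrightarrow> y = p \<or> T y p"
              by blast
            obtain c where c: "c \<in> b" "T p c" using F2 B[OF p(1)] by blast
            have "c = p \<or> T c p" using p A[OF c(1)] by blast
            thus False using c(2) Tlt by (meson less_asym less_irrefl)
          next
            case False
            obtain y where y: "T y w" "l \<le> y" using ito_lim[OF it wL lw False] by blast
            thus False using B[OF y(1)] lub by (meson leD)
          qed
        qed
        thus "l = z \<or> T l z" using W by blast
      qed
      thus ?thesis using lS unfolding b_def by blast
    qed
    thus False using lub by blast
  qed
  have bS: "b \<subseteq> S" unfolding b_def by blast
  have bcof: "cofinal_branch T S b" unfolding cofinal_branch_def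
    using bS b_lin b_down cof by blast
  have uniq: "\<And>c. cofinal_branch T S c \<Longrightarrow> c = b"
  proof -
    fix c assume cb: "cofinal_branch T S c"
    have cS: "c \<subseteq> S" and clin: "\<forall>x\<in>c. \<forall>y\<in>c. x = y \<or> T x y \<or> T y x"
      and cdown: "\<forall>y\<in>c. \<forall>x. T x y \<longrightarrow> x \<in> c" and ccof: "\<forall>x\<in>S. \<exists>y\<in>c. x \<le> y"
      using cb unfolding cofinal_branch_def by auto
    show "c = b"
    proof
      show "c \<subseteq> b"
      proof
        fix x assume xc: "x \<in> c"
        have "\<forall>z\<in>S. x \<le> z \<longrightarrow> x = z \<or> T x z"
        proof (intro ballI impI)
          fix z assume zS: "z \<in> S" and xz: "x \<le> z"
          obtain y where y: "y \<in> c" "z \<le> y" using ccof zS by blast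
          have "x = y \<or> T x y" using leT_le[of x y] xz y clin xc by (meson order.trans)
          thus "x = z \<or> T x z" using P[of y x z] y xz cS SL by blast
        qed
        thus "x \<in> b" using xc cS unfolding b_def by blast
      qed
    next
      show "b \<subseteq> c"
      proof
        fix x assume xb: "x \<in> b"
        obtain y where y: "y \<in> c" "x \<le> y" using ccof xb bS by blast
        have "x = y \<or> T x y" using xb y cS unfolding b_def by blast
        thus "x \<in> c" using y cdown by blast
      qed
    qed
  qed
  have last: "\<forall>l\<in>L. S = {x. x < l} \<longrightarrow> b = {x. T x l}"
  proof (intro ballI impI)
    fix l assume lL: "l \<in> L" and Sl: "S = {x. x < l}"
    have nsucc: "\<not> is_successor l"
    proof
      assume "is_successor l"
      then obtain i where i: "is_succ_of i l" unfolding is_successor_def by blast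
      hence "i \<in> S" using Sl unfolding is_succ_of_def by blast
      then obtain y where "y \<in> S" "i < y" using Snm by blast
      thus False using i Sl unfolding is_succ_of_def by blast
    qed
    show "b = {x. T x l}"
    proof
      show "b \<subseteq> {x. T x l}"
      proof
        fix x assume xb: "x \<in> b"
        hence xl: "x < l" using bS Sl by blast
        obtain y where y: "T y l" "x \<le> y" using ito_lim[OF it lL xl nsucc] by blast
        have "y \<in> S" using Sl Tlt y by blast
        hence "x = y \<or> T x y" using xb y unfolding b_def by blast
        thus "x \<in> {x. T x l}" using y Ttr by blast
      qed
    next
      show "{x. T x l} \<subseteq> b"
      proof
        fix x assume "x \<in> {x. T x l}"
        hence xl: "T x l" by simp
        have xS: "x \<in> S" using Sl Tlt xl by blast
        have "\<forall>z\<in>S. x \<le> z \<longrightarrow> x = z \<or> T x z"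
          using P[of l x] xl lL Sl by (simp add: less_imp_le)
        thus "x \<in> b" using xS unfolding b_def by blast
      qed
    qed
  qed
  show ?thesis using bcof uniq last by blast
qed

end
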